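(* Let $P$ be a finite point set in $\mathbb{S}^1$ containing a source $s$, with $|P|>2$, and let $\rho_{\mathrm{opt}}$ be an optimal range assignment for $P$. Then there exists a point $r\in\mathbb{S}^1$ such that $r\notin\mathrm{cov}(\rho_{\mathrm{opt}},P)$.
   Context: $\mathbb{S}^1$ is a circle with distance measured along the circle: $d(p,q)=\min(d_{\mathrm{cw}}(p,q),d_{\mathrm{ccw}}(p,q))$, where $d_{\mathrm{cw}},d_{\mathrm{ccw}}$ are clockwise and counterclockwise arc lengths. A range assignment $\rho$ gives each $p\in P$ a range $\rho(p)\ge0$, inducing a directed graph with edge $(p,q)$ iff $d(p,q)\le\rho(p)$; it is feasible if this graph contains an arborescence rooted at $s$ spanning $P$; its cost is $\sum_{p\in P}\rho(p)^\alpha$ for a fixed constant $\alpha>1$; an optimal assignment is a feasible one of minimum cost. The covered region $\mathrm{cov}(\rho,P)$ is the set of all $r\in\mathbb{S}^1$ such that there is $p\in P$ with $\rho(p)\ge d(p,r)$. *)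

theory Defs
  imports Complex_Main
begin

text \<open>The circle S^1 of circumference L > 0 is modelled as the interval [0, L)
  (reals modulo L).  Distance is the shorter of the two arc lengths.\<close>

definition circle :: "real \<Rightarrow> real set" where
  "circle L = {0..<L}"

definition circ_dist :: "real \<Rightarrow> real \<Rightarrow> real \<Rightarrow> real" where
  "circ_dist L p q = min \<bar>p - q\<bar> (L - \<bar>p - q\<bar>)"

definition induced_graph :: "real \<Rightarrow> (real \<Rightarrow> real) \<Rightarrow> real set \<Rightarrow> (real \<times> real) set" where
  "induced_graph L \<rho> P = {(p, q). p \<in> P \<and> q \<in> P \<and> p \<noteq> q \<and> circ_dist L p q \<le> \<rho> p}"

definition has_spanning_arborescence :: "('a \<times> 'a) set \<Rightarrow> 'a \<Rightarrow> 'a set \<Rightarrow> bool" where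
  "has_spanning_arborescence E s P \<longleftrightarrow>
     (\<exists>T. T \<subseteq> E \<and> T \<subseteq> P \<times> P \<and>
        (\<forall>q. (q, s) \<notin> T) \<and>
        (\<forall>p \<in> P - {s}. \<exists>!q. (q, p) \<in> T) \<and>
        (\<forall>p \<in> P. (s, p) \<in> T\<^sup>*))"

definition range_assignment :: "real set \<Rightarrow> (real \<Rightarrow> real) \<Rightarrow> bool" where
  "range_assignment P \<rho> \<longleftrightarrow> (\<forall>p \<in> P. \<rho> p \<ge> 0)"

definition feasible :: "real \<Rightarrow> real set \<Rightarrow> real \<Rightarrow> (real \<Rightarrow> real) \<Rightarrow> bool" where
  "feasible L P s \<rho> \<longleftrightarrow> range_assignment P \<rho> \<and> has_spanning_arborescence (induced_graph L \<rho> P) s P"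

definition cost :: "real \<Rightarrow> real set \<Rightarrow> (real \<Rightarrow> real) \<Rightarrow> real" where
  "cost \<alpha> P \<rho> = (\<Sum>p \<in> P. \<rho> p powr \<alpha>)"

definition optimal :: "real \<Rightarrow> real \<Rightarrow> real set \<Rightarrow> real \<Rightarrow> (real \<Rightarrow> real) \<Rightarrow> bool" where
  "optimal L \<alpha> P s \<rho> \<longleftrightarrow> feasible L P s \<rho> \<and>
     (\<forall>\<rho>'. feasible L P s \<rho>' \<longrightarrow> cost \<alpha> P \<rho> \<le> cost \<alpha> P \<rho>')"

definition cov :: "real \<Rightarrow> (real \<Rightarrow> real) \<Rightarrow> real set \<Rightarrow> real set" where
  "cov L \<rho> P = {r \<in> circle L. \<exists>p \<in> P. \<rho> p \<ge> circ_dist L p r}"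

end

theory Submission
  imports Defs
begin


lemma powr_superadd:
  fixes a b \<alpha> :: real assumes "a > 0" "b > 0" "\<alpha> > 1"
  shows "a powr \<alpha> + b powr \<alpha> < (a + b) powr \<alpha>"
proof -
  define t where "t = a / (a + b)"
  have t0: "0 < t" "t < 1" using assms by (auto simp: t_def field_simps)
  have bt: "b / (a + b) = 1 - t" using assms by (simp add: t_def field_simps)
  have "t powr \<alpha> < t powr 1" using t0 assms by (intro powr_less_mono') auto
  hence A: "t powr \<alpha> < t" using t0 by simp
  have "(1 - t) powr \<alpha> < (1 - t) powr 1" using t0 assms by (intro powr_less_mono') auto
  hence B: "(1 - t) powr \<alpha> < 1 - t" using t0 by simp
  have a: "a = t * (a + b)" using assms by (simp add: t_def)
  have b: "b = (1 - t) * (a + b)" using assms bt by (simp add: field_simps)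
  have "a powr \<alpha> = t powr \<alpha> * (a+b) powr \<alpha>"
    by (subst a, rule powr_mult) (use t0 assms in auto)?
  moreover have "b powr \<alpha> = (1-t) powr \<alpha> * (a+b) powr \<alpha>"
    by (subst b, rule powr_mult) (use t0 assms in auto)?
  moreover have "(a+b) powr \<alpha> > 0" using assms by simp
  ultimately show ?thesis using A B
    by (smt (verit, ccfv_SIG) distrib_right mult_less_cancel_right2)
qed

lemma cd_nonneg: "x \<in> circle L \<Longrightarrow> y \<in> circle L \<Longrightarrow> circ_dist L x y \<ge> 0"
  by (auto simp: circ_dist_def circle_def)
lemma cd_pos: "x \<in> circle L \<Longrightarrow> y \<in> circle L \<Longrightarrow> x \<noteq> y \<Longrightarrow> circ_dist L x y > 0"
  by (auto simp: circ_dist_def circle_def)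
lemma cd_sym: "circ_dist L x y = circ_dist L y x"
  by (auto simp: circ_dist_def abs_minus_commute)
lemma cd_le: "circ_dist L x y \<le> L / 2"
  by (auto simp: circ_dist_def min_def)
lemma cd_self: "L > 0 \<Longrightarrow> circ_dist L x x = 0"
  by (auto simp: circ_dist_def)
lemma cd_tri: "x \<in> circle L \<Longrightarrow> y \<in> circle L \<Longrightarrow> z \<in> circle L \<Longrightarrow>
  circ_dist L x z \<le> circ_dist L x y + circ_dist L y z"
  unfolding circ_dist_def circle_def by (auto simp: abs_if min_def)
lemma cd_antipode_unique: "x \<in> circle L \<Longrightarrow> y \<in> circle L \<Longrightarrow> z \<in> circle L \<Longrightarrow>
  circ_dist L x y = L/2 \<Longrightarrow> circ_dist L x z = L/2 \<Longrightarrow> y = z"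
  unfolding circ_dist_def circle_def by (auto simp: abs_if min_def split: if_splits)
lemma cd_antipode: "x \<in> circle L \<Longrightarrow> y \<in> circle L \<Longrightarrow> z \<in> circle L \<Longrightarrow>
  circ_dist L x y = L/2 \<Longrightarrow> circ_dist L z y = L/2 - circ_dist L x z"
  unfolding circ_dist_def circle_def by (auto simp: abs_if min_def split: if_splits)
lemma cd_beyond:
  assumes "p \<in> circle L" "f \<in> circle L" "0 < circ_dist L p f" "circ_dist L p f < L/2"
    "0 < \<eta>" "\<eta> < L/2 - circ_dist L p f"
  shows "\<exists>x \<in> circle L. circ_dist L f x \<le> \<eta> \<and> circ_dist L p x > circ_dist L p f"
proof -
  have cases: "(f > p \<and> f - p < L/2) \<or> (f > p \<and> f - p > L/2) \<or> (f < p \<and> p - f < L/2) \<or> (f < p \<and> p - f > L/2)"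
    using assms unfolding circ_dist_def circle_def by (auto simp: abs_if min_def split: if_splits)
  then show ?thesis
  proof (elim disjE)
    assume h: "f > p \<and> f - p < L/2"
    show ?thesis
    proof (cases "f + \<eta> < L")
      case True thus ?thesis using h assms
        by (intro bexI[of _ "f+\<eta>"]) (auto simp: circ_dist_def circle_def abs_if min_def)
    next
      case False thus ?thesis using h assms
        by (intro bexI[of _ "f+\<eta>-L"]) (auto simp: circ_dist_def circle_def abs_if min_def)
    qed
  next
    assume h: "f > p \<and> f - p > L/2"
    thus ?thesis using assms
        by (intro bexI[of _ "f-\<eta>"]) (auto simp: circ_dist_def circle_def abs_if min_def)
  next
    assume h: "f < p \<and> p - f < L/2"
    show ?thesis
    proof (cases "f - \<eta> \<ge> 0")
      case True thus ?thesis using h assms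
        by (intro bexI[of _ "f-\<eta>"]) (auto simp: circ_dist_def circle_def abs_if min_def)
    next
      case False thus ?thesis using h assms
        by (intro bexI[of _ "f-\<eta>+L"]) (auto simp: circ_dist_def circle_def abs_if min_def)
    qed
  next
    assume h: "f < p \<and> p - f > L/2"
    thus ?thesis using assms
        by (intro bexI[of _ "f+\<eta>"]) (auto simp: circ_dist_def circle_def abs_if min_def)
  qed
qed



lemma reach_arb:
  assumes sP: "s \<in> P" and EP: "E \<subseteq> P \<times> P" and R: "\<forall>y\<in>P. (s, y) \<in> E\<^sup>*"
  shows "has_spanning_arborescence E s P"
proof -
  define dist where "dist y = (LEAST n. (s, y) \<in> E ^^ n)" for y
  have dist_in: "(s, y) \<in> E ^^ dist y" if "y \<in> P" for y
    using R that unfolding dist_def by (metis LeastI rtrancl_power)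
  have dist_le: "dist y \<le> n" if "(s, y) \<in> E ^^ n" for y n
    unfolding dist_def using that by (rule Least_le)
  define par where "par y = (SOME z. (s, z) \<in> E ^^ (dist y - 1) \<and> (z, y) \<in> E)" for y
  have par: "(s, par y) \<in> E ^^ (dist y - 1) \<and> (par y, y) \<in> E \<and> dist (par y) < dist y"
    if "y \<in> P" "y \<noteq> s" for y
  proof -
    have "dist y \<noteq> 0" using dist_in[OF that(1)] that(2) by (metis relpow_0_E)
    then obtain m where m: "dist y = Suc m" by (cases "dist y") auto
    have "\<exists>z. (s, z) \<in> E ^^ (dist y - 1) \<and> (z, y) \<in> E"
      using dist_in[OF that(1)] m by (auto elim: relpow_Suc_E)
    hence h: "(s, par y) \<in> E ^^ (dist y - 1) \<and> (par y, y) \<in> E"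
      unfolding par_def by (rule someI_ex)
    moreover have "dist (par y) \<le> dist y - 1" using h dist_le by blast
    ultimately show ?thesis using m by auto
  qed
  define T where "T = {(par y, y) | y. y \<in> P - {s}}"
  have "(s, y) \<in> T\<^sup>*" if "y \<in> P" for y
    using that
  proof (induction "dist y" arbitrary: y rule: less_induct)
    case less
    show ?case
    proof (cases "y = s")
      case True thus ?thesis by simp
    next
      case False
      have p: "(par y, y) \<in> E" "dist (par y) < dist y" using par[OF less.prems False] by auto
      have "par y \<in> P" using p(1) EP by auto
      hence "(s, par y) \<in> T\<^sup>*" using less.hyps p(2) by blast
      moreover have "(par y, y) \<in> T" unfolding T_def using less.prems False by auto
      ultimately show ?thesis by (rule rtrancl_into_rtrancl)
    qed
  qed
  moreover have "T \<subseteq> E" unfolding T_def using par by auto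
  moreover hence "T \<subseteq> P \<times> P" using EP by auto
  moreover have "\<forall>q. (q, s) \<notin> T" unfolding T_def by auto
  moreover have "\<forall>p \<in> P - {s}. \<exists>!q. (q, p) \<in> T" unfolding T_def by auto
  ultimately show ?thesis unfolding has_spanning_arborescence_def by blast
qed

lemma arb_reach:
  assumes "has_spanning_arborescence E s P" "y \<in> P"
  shows "(s, y) \<in> E\<^sup>*"
  using assms unfolding has_spanning_arborescence_def by (meson rtrancl_mono subsetD)

lemma edge_out:
  assumes "E' \<subseteq> E" "(s, y) \<in> E\<^sup>*" "(s, y) \<notin> E'\<^sup>*"
  shows "\<exists>a b. (s, a) \<in> E'\<^sup>* \<and> (a, b) \<in> E \<and> (s, b) \<notin> E'\<^sup>*"
proof (rule ccontr)
  assume H: "\<not> ?thesis"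
  have "(s, z) \<in> E'\<^sup>*" if "(s, z) \<in> E\<^sup>*" for z
    using that
  proof (induction rule: rtrancl_induct)
    case base thus ?case by simp
  next
    case (step a b) thus ?case using H by blast
  qed
  thus False using assms by blast
qed



definition red :: "real \<Rightarrow> real set \<Rightarrow> (real \<Rightarrow> real) \<Rightarrow> real \<Rightarrow> (real \<Rightarrow> real)" where
  "red L P \<rho> p = \<rho>(p := Max (insert 0 {circ_dist L p y | y. y \<in> P \<and> circ_dist L p y < \<rho> p}))"

lemma red_other: "x \<noteq> p \<Longrightarrow> red L P \<rho> p x = \<rho> x"
  by (simp add: red_def)

lemma red_fin: "finite P \<Longrightarrow> finite (insert 0 {circ_dist L p y | y. y \<in> P \<and> circ_dist L p y < \<rho> p})"
  by simp

lemma red_nonneg: "finite P \<Longrightarrow> red L P \<rho> p p \<ge> 0"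
  unfolding red_def by (simp add: red_fin)

lemma red_lt: "finite P \<Longrightarrow> \<rho> p > 0 \<Longrightarrow> red L P \<rho> p p < \<rho> p"
  unfolding red_def using red_fin[of P L p \<rho>] by (auto simp: Max_less_iff)

lemma red_le: "finite P \<Longrightarrow> \<rho> p \<ge> 0 \<Longrightarrow> red L P \<rho> p p \<le> \<rho> p"
  unfolding red_def using red_fin[of P L p \<rho>] by (auto simp: Max_le_iff)

lemma red_ge: "finite P \<Longrightarrow> y \<in> P \<Longrightarrow> circ_dist L p y < \<rho> p \<Longrightarrow> circ_dist L p y \<le> red L P \<rho> p p"
  unfolding red_def using red_fin[of P L p \<rho>] by (auto intro!: Max_ge)

lemma red_bound: "finite P \<Longrightarrow> D \<ge> 0 \<Longrightarrow> (\<And>y. y \<in> P \<Longrightarrow> circ_dist L p y < \<rho> p \<Longrightarrow> circ_dist L p y \<le> D)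
   \<Longrightarrow> red L P \<rho> p p \<le> D"
  unfolding red_def using red_fin[of P L p \<rho>] by (auto simp: Max_le_iff)

lemma edge_mono: "(a, b) \<in> induced_graph L \<rho>1 P \<Longrightarrow> \<rho>1 a \<le> \<rho>2 a \<Longrightarrow> (a, b) \<in> induced_graph L \<rho>2 P"
  unfolding induced_graph_def by auto

lemma graph_mono: "(\<And>a. a \<in> P \<Longrightarrow> \<rho>1 a \<le> \<rho>2 a) \<Longrightarrow> induced_graph L \<rho>1 P \<subseteq> induced_graph L \<rho>2 P"
  unfolding induced_graph_def by (auto intro: order_trans)

lemma graph_sub: "induced_graph L \<rho> P \<subseteq> P \<times> P"
  unfolding induced_graph_def by auto

lemma reach_in: "(s, y) \<in> (induced_graph L \<rho> P)\<^sup>* \<Longrightarrow> s \<in> P \<Longrightarrow> y \<in> P"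
  by (induction rule: rtrancl_induct) (auto simp: induced_graph_def)

lemma feas_of_reach: "s \<in> P \<Longrightarrow> (\<forall>x\<in>P. \<rho> x \<ge> 0) \<Longrightarrow> (\<forall>y\<in>P. (s, y) \<in> (induced_graph L \<rho> P)\<^sup>*)
  \<Longrightarrow> feasible L P s \<rho>"
  unfolding feasible_def range_assignment_def using reach_arb[OF _ graph_sub] by simp

lemma cost_less1:
  assumes "finite P" "p \<in> P" "\<forall>x\<in>P-{p}. g x = h x" "g p powr a < h p powr a"
  shows "cost a P g < cost a P h"
proof -
  have "cost a P g = g p powr a + (\<Sum>x\<in>P-{p}. g x powr a)"
    unfolding cost_def using assms by (simp add: sum.remove)
  moreover have "cost a P h = h p powr a + (\<Sum>x\<in>P-{p}. h x powr a)"
    unfolding cost_def using assms by (simp add: sum.remove)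
  moreover have "(\<Sum>x\<in>P-{p}. g x powr a) = (\<Sum>x\<in>P-{p}. h x powr a)"
    using assms by (intro sum.cong) auto
  ultimately show ?thesis using assms by simp
qed

lemma cost_less2:
  assumes "finite P" "p \<in> P" "q \<in> P" "p \<noteq> q" "\<forall>x\<in>P-{p,q}. g x = h x"
    "g p powr a + g q powr a < h p powr a + h q powr a"
  shows "cost a P g < cost a P h"
proof -
  have e: "P = insert p (insert q (P - {p,q}))" using assms by auto
  have "cost a P g = g p powr a + (g q powr a + (\<Sum>x\<in>P-{p,q}. g x powr a))"
    unfolding cost_def using assms by (subst e) (simp add: sum.insert_remove)
  moreover have "cost a P h = h p powr a + (h q powr a + (\<Sum>x\<in>P-{p,q}. h x powr a))"
    unfolding cost_def using assms by (subst e) (simp add: sum.insert_remove)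
  moreover have "(\<Sum>x\<in>P-{p,q}. g x powr a) = (\<Sum>x\<in>P-{p,q}. h x powr a)"
    using assms by (intro sum.cong) auto
  ultimately show ?thesis using assms by simp
qed

lemma finite_pos_lb:
  assumes "finite S" "\<forall>q\<in>S. g q > (0::real)"
  shows "\<exists>\<delta>>0. \<forall>q\<in>S. \<delta> \<le> g q"
  using assms
proof (induction S rule: finite_induct)
  case empty thus ?case by (intro exI[of _ 1]) auto
next
  case (insert x F)
  then obtain \<delta> where "\<delta> > 0" "\<forall>q\<in>F. \<delta> \<le> g q" by auto
  thus ?case using insert.prems by (intro exI[of _ "min \<delta> (g x)"]) auto
qed

lemma finite_argmax:
  assumes "finite Q" "Q \<noteq> {}"
  shows "\<exists>p\<in>Q. \<forall>q\<in>Q. (f q :: nat) \<le> f p"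
proof -
  have "Max (f ` Q) \<in> f ` Q" using assms by simp
  then obtain p where "p \<in> Q" "f p = Max (f ` Q)" by auto
  thus ?thesis using assms by (metis Max_ge finite_imageI imageI)
qed



theorem lemma3:
  fixes L \<alpha> s :: real and P :: "real set" and \<rho> :: "real \<Rightarrow> real"
  assumes "L > 0" and "\<alpha> > 1"
    and "finite P" and "P \<subseteq> circle L" and "s \<in> P" and "card P > 2"
    and "optimal L \<alpha> P s \<rho>"
  shows "\<exists>r \<in> circle L. r \<notin> cov L \<rho> P"
proof -
  note L0 = assms(1) and a1 = assms(2) and fin = assms(3) and Pc = assms(4) and sP = assms(5)
    and card3 = assms(6)
  have feas: "feasible L P s \<rho>" and opt: "\<And>\<rho>'. feasible L P s \<rho>' \<Longrightarrow> cost \<alpha> P \<rho> \<le> cost \<alpha> P \<rho>'"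
    using assms(7) unfolding optimal_def by auto
  have ra: "\<And>x. x \<in> P \<Longrightarrow> \<rho> x \<ge> 0" using feas unfolding feasible_def range_assignment_def by auto
  define E where "E = induced_graph L \<rho> P"
  have allr: "(s, y) \<in> E\<^sup>*" if "y \<in> P" for y
    using arb_reach[OF _ that] feas unfolding feasible_def E_def by simp
  have inC: "\<And>x. x \<in> P \<Longrightarrow> x \<in> circle L" using Pc by auto
  define Ep where "Ep p = induced_graph L (red L P \<rho> p) P" for p
  define Reach where "Reach p = {y. (s, y) \<in> (Ep p)\<^sup>*}" for p
  have Reach_sub: "Reach p \<subseteq> P" for p unfolding Reach_def Ep_def using reach_in[OF _ sP] by blast
  have red_le_all: "red L P \<rho> p x \<le> \<rho> x" if "x \<in> P" for p x
  proof (cases "x = p")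
    case True thus ?thesis using red_le[of P \<rho> p L] fin ra[OF that] by simp
  next
    case False thus ?thesis by (simp add: red_other)
  qed
  have Ep_sub: "Ep p \<subseteq> E" for p
    unfolding Ep_def E_def by (rule graph_mono) (rule red_le_all)
  have notall: "\<not> P \<subseteq> Reach p" if "p \<in> P" "\<rho> p > 0" for p
  proof
    assume H: "P \<subseteq> Reach p"
    have "feasible L P s (red L P \<rho> p)"
    proof (rule feas_of_reach[OF sP])
      show "\<forall>x\<in>P. 0 \<le> red L P \<rho> p x" using ra fin red_nonneg red_other by metis
      show "\<forall>y\<in>P. (s, y) \<in> (induced_graph L (red L P \<rho> p) P)\<^sup>*"
        using H unfolding Reach_def Ep_def by auto
    qed
    moreover have "cost \<alpha> P (red L P \<rho> p) < cost \<alpha> P \<rho>"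
    proof (rule cost_less1[OF fin that(1)])
      show "\<forall>x\<in>P - {p}. red L P \<rho> p x = \<rho> x" by (auto simp: red_other)
      show "red L P \<rho> p p powr \<alpha> < \<rho> p powr \<alpha>"
        using red_lt[of P \<rho> p L, OF fin that(2)] red_nonneg[OF fin] a1 by (intro powr_less_mono2) auto
    qed
    ultimately show False using opt by fastforce
  qed
  obtain y where y: "y \<in> P" "y \<noteq> s"
  proof -
    have "P - {s} \<noteq> {}"
    proof
      assume "P - {s} = {}"
      hence "P \<subseteq> {s}" by auto
      hence "card P \<le> card {s}" by (rule card_mono[rotated]) auto
      thus False using card3 by simp
    qed
    thus ?thesis using that by blast
  qed
  define Q where "Q = {p \<in> P. \<rho> p > 0}"
  have "s \<in> Q"
  proof -
    have "(s, y) \<in> E\<^sup>*" using allr y by auto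
    then obtain z where "(s, z) \<in> E" using y(2) by (metis converse_rtranclE)
    hence "s \<noteq> z" "z \<in> P" "circ_dist L s z \<le> \<rho> s" unfolding E_def induced_graph_def by auto
    moreover have "circ_dist L s z > 0" using cd_pos inC sP calculation by blast
    ultimately show ?thesis unfolding Q_def using sP by auto
  qed
  moreover have "finite Q" unfolding Q_def using fin by auto
  ultimately obtain p where pQ: "p \<in> Q" and pmax: "\<And>q. q \<in> Q \<Longrightarrow> card (Reach q) \<le> card (Reach p)"
    using finite_argmax[of Q "\<lambda>q. card (Reach q)"] by blast
  have pP: "p \<in> P" and pp: "\<rho> p > 0" using pQ unfolding Q_def by auto
  have sR: "s \<in> Reach p" unfolding Reach_def by auto
  obtain y0 where y0: "y0 \<in> P" "y0 \<notin> Reach p" using notall[OF pP pp] by auto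
  obtain a f where af: "(s, a) \<in> (Ep p)\<^sup>*" "(a, f) \<in> E" "(s, f) \<notin> (Ep p)\<^sup>*"
  proof -
    have "(s, y0) \<notin> (Ep p)\<^sup>*" using y0(2) unfolding Reach_def by auto
    from edge_out[OF Ep_sub[of p] allr[OF y0(1)] this] show ?thesis using that by blast
  qed
  have aR: "a \<in> Reach p" using af unfolding Reach_def by auto
  have fR: "f \<notin> Reach p" using af unfolding Reach_def by auto
  have fP: "f \<in> P" and af_ne: "a \<noteq> f" and adist: "circ_dist L a f \<le> \<rho> a"
    using af(2) unfolding E_def induced_graph_def by auto
  have aP: "a \<in> P" using aR Reach_sub by auto
  have "a = p"
  proof (rule ccontr)
    assume anp: "a \<noteq> p"
    have "(a, f) \<in> Ep p" unfolding Ep_def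
      by (rule edge_mono[OF af(2)[unfolded E_def]]) (simp add: red_other anp)
    from rtrancl_into_rtrancl[OF af(1) this] show False using af(3) by simp
  qed
  have fp: "f \<noteq> p" using af_ne \<open>a = p\<close> by simp
  have dpf: "circ_dist L p f = \<rho> p"
  proof -
    have nle: "\<not> circ_dist L p f \<le> red L P \<rho> p p"
    proof
      assume "circ_dist L p f \<le> red L P \<rho> p p"
      hence "(p, f) \<in> Ep p" unfolding Ep_def induced_graph_def using pP fP fp by simp
      from rtrancl_into_rtrancl[OF af(1)[unfolded \<open>a = p\<close>] this] show False using af(3) by simp
    qed
    have le: "circ_dist L p f \<le> \<rho> p" using adist \<open>a = p\<close> by simp
    show ?thesis
    proof (rule ccontr)
      assume "circ_dist L p f \<noteq> \<rho> p"
      hence "circ_dist L p f < \<rho> p" using le by simp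
      from red_ge[of P f L p \<rho>] fin fP this nle show False by simp
    qed
  qed
  have zero: "\<rho> u = 0" if uP: "u \<in> P" and uR: "u \<notin> Reach p" for u
  proof (rule ccontr)
    assume "\<rho> u \<noteq> 0"
    hence uQ: "u \<in> Q" using ra[OF uP] uP unfolding Q_def by auto
    have sub: "(s, z) \<in> (Ep u)\<^sup>*" if "(s, z) \<in> (Ep p)\<^sup>*" for z
      using that
    proof (induction rule: rtrancl_induct)
      case base thus ?case by simp
    next
      case (step b c)
      have "b \<in> Reach p" using step.hyps(1) unfolding Reach_def by auto
      hence bu: "b \<noteq> u" using uR by auto
      have bP: "b \<in> P" using step.hyps(2) unfolding Ep_def induced_graph_def by auto
      have "red L P \<rho> p b \<le> red L P \<rho> u b"
        using bu red_le_all[OF bP, of p] by (simp add: red_other)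
      have "(b, c) \<in> Ep u" unfolding Ep_def
        by (rule edge_mono[OF step.hyps(2)[unfolded Ep_def]]) fact
      from rtrancl_into_rtrancl[OF step.IH this] show ?case .
    qed
    have "Reach p \<subseteq> Reach u" using sub unfolding Reach_def by auto
    moreover have "f \<in> Reach u"
    proof -
      have sp: "(s, p) \<in> (Ep u)\<^sup>*" using sub[OF af(1)] \<open>a = p\<close> by simp
      have "p \<noteq> u" using uR aR \<open>a = p\<close> by auto
      hence "(p, f) \<in> Ep u" unfolding Ep_def
        by (intro edge_mono[OF af(2)[unfolded E_def \<open>a = p\<close>]]) (simp add: red_other)
      from rtrancl_into_rtrancl[OF sp this] show ?thesis unfolding Reach_def by simp
    qed
    ultimately have "insert f (Reach p) \<subseteq> Reach u" by auto
    moreover have "finite (Reach u)" using finite_subset[OF Reach_sub fin] .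
    ultimately have "card (insert f (Reach p)) \<le> card (Reach u)" by (rule card_mono[rotated])
    moreover have "card (insert f (Reach p)) = Suc (card (Reach p))"
      using fR finite_subset[OF Reach_sub fin] by (simp add: card_insert_disjoint)
    ultimately show False using pmax[OF uQ] by simp
  qed
  have fzero: "\<rho> f = 0" using zero fP fR by auto
  show ?thesis
  proof (cases "circ_dist L p f < L/2")
    case True
    have sep: "circ_dist L q f - \<rho> q > 0" if "q \<in> P - {p, f}" for q
    proof (cases "q \<in> Reach p")
      case True
      show ?thesis
      proof (rule ccontr)
        assume "\<not> ?thesis"
        hence "circ_dist L q f \<le> red L P \<rho> p q" using that by (auto simp: red_other)
        hence "(q, f) \<in> Ep p" unfolding Ep_def induced_graph_def using that fP by auto
        from rtrancl_into_rtrancl[OF True[unfolded Reach_def, simplified] this] show False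
          using fR unfolding Reach_def by simp
      qed
    next
      case False
      hence "\<rho> q = 0" using zero that by auto
      moreover have "circ_dist L q f > 0" using that inC fP by (intro cd_pos) auto
      ultimately show ?thesis by simp
    qed
    obtain \<delta> where \<delta>: "\<delta> > 0" "\<And>q. q \<in> P - {p, f} \<Longrightarrow> \<delta> \<le> circ_dist L q f - \<rho> q"
      using finite_pos_lb[of "P - {p, f}" "\<lambda>q. circ_dist L q f - \<rho> q"] sep fin by auto
    define \<eta> where "\<eta> = min (\<delta>/2) ((L/2 - \<rho> p)/2)"
    have \<eta>: "\<eta> > 0" "\<eta> < L/2 - circ_dist L p f" "\<eta> < \<delta>"
      using \<delta> True dpf unfolding \<eta>_def by (auto simp: min_def)
    obtain x where x: "x \<in> circle L" "circ_dist L f x \<le> \<eta>" "circ_dist L p x > circ_dist L p f"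
      using cd_beyond[OF inC[OF pP] inC[OF fP] _ True \<eta>(1,2)] dpf pp by auto
    have "\<rho> q < circ_dist L q x" if qP: "q \<in> P" for q
    proof -
      consider "q = p" | "q = f" | "q \<in> P - {p, f}" using qP by auto
      thus ?thesis
      proof cases
        case 1 thus ?thesis using x dpf by simp
      next
        case 2
        have "x \<noteq> f" using x(3) by auto
        thus ?thesis using 2 fzero cd_pos inC[OF fP] x(1) by auto
      next
        case 3
        have "circ_dist L q f \<le> circ_dist L q x + circ_dist L x f"
          using cd_tri[OF inC[OF qP] x(1) inC[OF fP]] .
        moreover have "circ_dist L x f = circ_dist L f x" by (rule cd_sym)
        ultimately show ?thesis using \<delta>(2)[OF 3] x(2) \<eta>(3) by linarith
      qed
    qed
    hence "x \<notin> cov L \<rho> P" unfolding cov_def using not_le by blast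
    thus ?thesis using x(1) by blast
  next
    case False
    have half: "circ_dist L p f = L/2" using False cd_le[of L p f] by linarith
    have rhop: "\<rho> p = L/2" using half dpf by simp
    have clos: "z \<in> Reach p \<or> z = f" if "(s, z) \<in> E\<^sup>*" for z
      using that
    proof (induction rule: rtrancl_induct)
      case base thus ?case using sR by simp
    next
      case (step b c)
      have bc: "b \<in> P" "c \<in> P" "b \<noteq> c" "circ_dist L b c \<le> \<rho> b"
        using step.hyps(2) unfolding E_def induced_graph_def by auto
      from step.IH show ?case
      proof
        assume "b = f"
        hence "circ_dist L b c > 0" using bc cd_pos[OF inC[OF bc(1)] inC[OF bc(2)]] by simp
        thus ?thesis using bc fzero \<open>b = f\<close> by simp
      next
        assume bR: "b \<in> Reach p"
        show ?thesis
        proof (cases "(b, c) \<in> Ep p")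
          case True
          from rtrancl_into_rtrancl[OF bR[unfolded Reach_def, simplified] True] show ?thesis
            unfolding Reach_def by simp
        next
          case False
          have "b = p"
          proof (rule ccontr)
            assume "b \<noteq> p"
            hence "(b, c) \<in> Ep p" unfolding Ep_def
              by (intro edge_mono[OF step.hyps(2)[unfolded E_def]]) (simp add: red_other)
            thus False using False by simp
          qed
          have "\<not> circ_dist L p c \<le> red L P \<rho> p p"
            using False bc \<open>b = p\<close> unfolding Ep_def induced_graph_def by auto
          hence "\<not> circ_dist L p c < \<rho> p" using red_ge[of P c L p \<rho>] fin bc(2) by auto
          hence "circ_dist L p c = L/2" using bc \<open>b = p\<close> rhop by auto
          thus ?thesis using cd_antipode_unique[OF inC[OF pP] inC[OF bc(2)] inC[OF fP]] half by auto
        qed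
      qed
    qed
    have PR: "P - {f} \<subseteq> Reach p"
    proof
      fix z assume "z \<in> P - {f}"
      thus "z \<in> Reach p" using clos[OF allr[of z]] by auto
    qed
    obtain y1 where y1: "y1 \<in> P" "y1 \<noteq> p" "y1 \<noteq> f"
    proof -
      have "\<not> P \<subseteq> {p, f}"
      proof
        assume "P \<subseteq> {p, f}"
        hence "card P \<le> card {p, f}" by (rule card_mono[rotated]) auto
        also have "\<dots> \<le> 2" by (simp add: card_insert_le_m1)
        finally show False using card3 by simp
      qed
      thus ?thesis using that by blast
    qed
    define Ds where "Ds = circ_dist L p ` (P - {f})"
    define D where "D = Max Ds"
    have Dsf: "finite Ds" "Ds \<noteq> {}" unfolding Ds_def using fin y1 by auto
    have "D \<in> Ds" unfolding D_def using Max_in[OF Dsf] .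
    then obtain q where q: "q \<in> P - {f}" "circ_dist L p q = D"
      unfolding Ds_def by auto
    have Dge: "circ_dist L p z \<le> D" if "z \<in> P - {f}" for z
      unfolding D_def using Dsf that unfolding Ds_def by (intro Max_ge) auto
    have Dpos: "D > 0" using Dge[of y1] y1 cd_pos[OF inC[OF pP] inC[OF y1(1)]] by auto
    have qp: "q \<noteq> p" using q Dpos cd_self[OF L0] by auto
    have DL: "D < L/2"
    proof -
      have "D \<noteq> L/2" using cd_antipode_unique[OF inC[OF pP] inC[of q] inC[OF fP]] q half by auto
      thus ?thesis using cd_le[of L p q] q by auto
    qed
    have redD: "red L P \<rho> p p \<le> D"
    proof (rule red_bound[OF fin])
      show "D \<ge> 0" using Dpos by simp
      fix z assume "z \<in> P" "circ_dist L p z < \<rho> p"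
      hence "z \<noteq> f" using rhop half by auto
      thus "circ_dist L p z \<le> D" using Dge \<open>z \<in> P\<close> by simp
    qed
    have dqf: "circ_dist L q f = L/2 - D"
      using cd_antipode[OF inC[OF pP] inC[OF fP] inC[of q]] q half by auto
    define \<rho>2 where "\<rho>2 = (red L P \<rho> p)(q := max (\<rho> q) (circ_dist L q f))"
    have le2: "red L P \<rho> p x \<le> \<rho>2 x" for x unfolding \<rho>2_def using qp by (auto simp: red_other)
    have "feasible L P s \<rho>2"
    proof (rule feas_of_reach[OF sP])
      show "\<forall>x\<in>P. 0 \<le> \<rho>2 x"
      proof
        fix x assume xP: "x \<in> P"
        have "0 \<le> red L P \<rho> p x"
          using ra[OF xP] red_nonneg[OF fin, of L \<rho> p] by (cases "x = p") (auto simp: red_other)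
        thus "0 \<le> \<rho>2 x" using le2[of x] by simp
      qed
      have sub2: "Ep p \<subseteq> induced_graph L \<rho>2 P" unfolding Ep_def by (rule graph_mono) (rule le2)
      show "\<forall>y\<in>P. (s, y) \<in> (induced_graph L \<rho>2 P)\<^sup>*"
      proof
        fix z assume zP: "z \<in> P"
        have qR: "(s, q) \<in> (induced_graph L \<rho>2 P)\<^sup>*"
          using PR q(1) rtrancl_mono[OF sub2] unfolding Reach_def by auto
        show "(s, z) \<in> (induced_graph L \<rho>2 P)\<^sup>*"
        proof (cases "z = f")
          case True
          have "(q, f) \<in> induced_graph L \<rho>2 P" unfolding induced_graph_def \<rho>2_def using q fP by auto
          from rtrancl_into_rtrancl[OF qR this] show ?thesis using True by simp
        next
          case False
          thus ?thesis using PR zP rtrancl_mono[OF sub2] unfolding Reach_def by auto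
        qed
      qed
    qed
    moreover have "cost \<alpha> P \<rho>2 < cost \<alpha> P \<rho>"
    proof (rule cost_less2[OF fin pP _ qp[symmetric]])
      show "q \<in> P" using q by auto
      show "\<forall>x\<in>P - {p, q}. \<rho>2 x = \<rho> x" unfolding \<rho>2_def by (auto simp: red_other)
      have r2p: "\<rho>2 p = red L P \<rho> p p" unfolding \<rho>2_def using qp by auto
      have r2q: "\<rho>2 q = max (\<rho> q) (L/2 - D)" unfolding \<rho>2_def using dqf by auto
      have A: "red L P \<rho> p p powr \<alpha> \<le> D powr \<alpha>"
        using redD red_nonneg[OF fin] a1 by (intro powr_mono2) auto
      have rq0: "\<rho> q \<ge> 0" using ra q by auto
      have B: "D powr \<alpha> + max (\<rho> q) (L/2 - D) powr \<alpha> < (L/2) powr \<alpha> + \<rho> q powr \<alpha>"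
      proof (cases "\<rho> q \<ge> L/2 - D")
        case True
        have "D powr \<alpha> < (L/2) powr \<alpha>" using Dpos DL a1 by (intro powr_less_mono2) auto
        thus ?thesis using True by simp
      next
        case False
        have "D powr \<alpha> + (L/2 - D) powr \<alpha> < (D + (L/2 - D)) powr \<alpha>"
          using Dpos DL a1 by (intro powr_superadd) auto
        hence "D powr \<alpha> + (L/2 - D) powr \<alpha> < (L/2) powr \<alpha>" by simp
        moreover have "\<rho> q powr \<alpha> \<ge> 0" by simp
        moreover have "max (\<rho> q) (L/2 - D) powr \<alpha> = (L/2 - D) powr \<alpha>" using False by simp
        ultimately show ?thesis by linarith
      qed
      show "\<rho>2 p powr \<alpha> + \<rho>2 q powr \<alpha> < \<rho> p powr \<alpha> + \<rho> q powr \<alpha>"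
        unfolding r2p r2q rhop using A B by linarith
    qed
    ultimately show ?thesis using opt by fastforce
  qed
qed

end
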